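(* Let $K$ be a set of $m$ knapsacks with capacities $S_i$, $i\in K$, and let $J_S'$ be a set of items each of which is small with respect to every knapsack of $K$, i.e., $s_j<\varepsilon S_i$ for all $j\in J_S'$ and $i\in K$. Let $J_B'$ be a set of items together with a feasible integral packing of $J_B'$ into the knapsacks of $K$ such that the total remaining free capacity in these $m$ knapsacks is at least $s(J_S')=\sum_{j\in J_S'}s_j$. Then the following procedure feasibly packs all items of $J_B'\cup J_S'$ into the $m$ knapsacks of $K$ plus $\varepsilon m$ additional knapsacks, each of which has capacity $\min_{i\in K}S_i$: keep the packing of $J_B'$; consider the items of $J_S'$ in an arbitrary order and the knapsacks of $K$ in an arbitrary order, with the first knapsack opened; if the current small item fits into the remaining capacity of the currently open knapsack, place it there; otherwise place it into the next free slot of the additional knapsacks, close the current knapsack and open the next one.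
   Context: Throughout, $\varepsilon>0$ with $\frac1\varepsilon\in\mathbb{N}$ and $\varepsilon m\in\mathbb{N}$. A packing is feasible if every item is placed in at most one knapsack and the total size of items in each knapsack does not exceed its capacity. *)

theory Defs
  imports Main "HOL.Real"
begin

datatype knap = Orig nat | Extra nat

text \<open>A (feasible) packing of the item set J with sizes s into the knapsack set B with
capacities cap, given by an assignment P (so every item is in at most one knapsack):
every item is packed into some knapsack of B and no capacity is exceeded.\<close>
definition feasible_packing ::
  "'a set \<Rightarrow> ('a \<Rightarrow> real) \<Rightarrow> 'b set \<Rightarrow> ('b \<Rightarrow> real) \<Rightarrow> ('a \<Rightarrow> 'b) \<Rightarrow> bool" where
  "feasible_packing J s B cap P \<longleftrightarrow>
     (\<forall>j\<in>J. P j \<in> B) \<and> (\<forall>b\<in>B. (\<Sum>j\<in>{j\<in>J. P j = b}. s j) \<le> cap b)"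

definition residual :: "(nat \<Rightarrow> real) \<Rightarrow> 'a set \<Rightarrow> ('a \<Rightarrow> real) \<Rightarrow> ('a \<Rightarrow> nat) \<Rightarrow> nat \<Rightarrow> real" where
  "residual S JB s pB i = S i - (\<Sum>j\<in>{j\<in>JB. pB j = i}. s j)"

text \<open>State: index i of the currently open knapsack, its remaining
capacity r, and the number t of items already placed into additional knapsacks.
Each additional knapsack has L slots; the t-th overflow item goes to additional knapsack
\<open>t div L\<close>. R gives the initial remaining capacity of each original knapsack.\<close>
fun greedy :: "('a \<Rightarrow> real) \<Rightarrow> (nat \<Rightarrow> real) \<Rightarrow> nat \<Rightarrow> nat \<Rightarrow> real \<Rightarrow> nat \<Rightarrow> 'a list \<Rightarrow> ('a \<times> knap) list" where
  "greedy s R L i r t [] = []"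
| "greedy s R L i r t (j # js) =
     (if s j \<le> r then (j, Orig i) # greedy s R L i (r - s j) t js
      else (j, Extra (t div L)) # greedy s R L (Suc i) (R (Suc i)) (Suc t) js)"

definition greedy_packing ::
  "real \<Rightarrow> (nat \<Rightarrow> real) \<Rightarrow> 'a set \<Rightarrow> ('a \<Rightarrow> real) \<Rightarrow> ('a \<Rightarrow> nat) \<Rightarrow> 'a list \<Rightarrow> 'a \<Rightarrow> knap" where
  "greedy_packing \<epsilon> S JB s pB js j =
     (let R = residual S JB s pB; L = nat \<lfloor>1 / \<epsilon>\<rfloor> in
      case map_of (greedy s R L 0 (R 0) 0 js) j of Some k \<Rightarrow> k | None \<Rightarrow> Orig (pB j))"

definition knap_cap :: "(nat \<Rightarrow> real) \<Rightarrow> nat \<Rightarrow> knap \<Rightarrow> real" where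
  "knap_cap S m k = (case k of Orig i \<Rightarrow> S i | Extra _ \<Rightarrow> Min (S ` {..<m}))"

definition all_knaps :: "nat \<Rightarrow> nat \<Rightarrow> knap set" where
  "all_knaps m e = Orig ` {..<m} \<union> Extra ` {..<e}"

end

theory Submission
  imports Defs
begin
fun isX :: "knap \<Rightarrow> bool" where "isX (Extra _) = True" | "isX (Orig _) = False"
abbreviation nx :: "('a \<times> knap) list \<Rightarrow> nat" where "nx G \<equiv> length (filter (\<lambda>p. isX (snd p)) G)"

lemma g_fst: "map fst (greedy s R L i r t js) = js"
  by (induction js arbitrary: i r t) auto

lemma g_orig: "(j, Orig k) \<in> set (greedy s R L i r t js) \<Longrightarrow> i \<le> k \<and> k \<le> i + nx (greedy s R L i r t js)"
  by (induction js arbitrary: i r t) (auto split: if_splits, fastforce+)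

lemma g_extra: "(j, Extra e) \<in> set (greedy s R L i r t js) \<Longrightarrow> \<exists>q. t \<le> q \<and> q < t + nx (greedy s R L i r t js) \<and> e = q div L"
proof (induction js arbitrary: i r t)
  case Nil then show ?case by simp
next
  case (Cons a js)
  show ?case
  proof (cases "s a \<le> r")
    case True then show ?thesis using Cons by auto
  next
    case False
    then have G: "greedy s R L i r t (a # js) = (a, Extra (t div L)) # greedy s R L (Suc i) (R (Suc i)) (Suc t) js" by simp
    show ?thesis
    proof (cases "(j, Extra e) = (a, Extra (t div L))")
      case True then show ?thesis unfolding G by auto
    next
      case False
      then have "(j, Extra e) \<in> set (greedy s R L (Suc i) (R (Suc i)) (Suc t) js)" using Cons.prems G by auto
      from Cons.IH[OF this] obtain q where "Suc t \<le> q" "q < Suc t + nx (greedy s R L (Suc i) (R (Suc i)) (Suc t) js)" "e = q div L" by blast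
      then show ?thesis unfolding G by (intro exI[of _ q]) auto
    qed
  qed
qed

lemma g_sum_orig: "i \<le> k \<Longrightarrow> sum_list (map (\<lambda>p. s (fst p)) (filter (\<lambda>p. snd p = Orig k) (greedy s R L i r t js)))
   \<le> (if k = i then max 0 r else max 0 (R k))"
proof (induction js arbitrary: i r t)
  case Nil then show ?case by simp
next
  case (Cons a js)
  show ?case
  proof (cases "s a \<le> r")
    case True
    have IH: "sum_list (map (\<lambda>p. s (fst p)) (filter (\<lambda>p. snd p = Orig k) (greedy s R L i (r - s a) t js)))
   \<le> (if k = i then max 0 (r - s a) else max 0 (R k))" using Cons by blast
    show ?thesis using True IH by (cases "k = i") (auto simp: max_def split: if_splits)
  next
    case False
    show ?thesis
    proof (cases "k = i")
      case True
      have "filter (\<lambda>p. snd p = Orig k) (greedy s R L (Suc i) (R (Suc i)) (Suc t) js) = []"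
        using g_orig[of _ k s R L "Suc i"] True by (auto simp: filter_empty_conv) (metis prod.collapse Suc_n_not_le_n)
      then show ?thesis using False True by simp
    next
      case ne: False
      have IH: "sum_list (map (\<lambda>p. s (fst p)) (filter (\<lambda>p. snd p = Orig k) (greedy s R L (Suc i) (R (Suc i)) (Suc t) js)))
        \<le> (if k = Suc i then max 0 (R (Suc i)) else max 0 (R k))" using Cons ne by simp
      then show ?thesis using False ne by (auto split: if_splits)
    qed
  qed
qed

lemma g_close: "\<forall>j\<in>set js. s j \<ge> 0 \<Longrightarrow> 1 \<le> c \<Longrightarrow> c \<le> nx (greedy s R L i r t js) \<Longrightarrow>
   sum_list (map s js) > r + (\<Sum>n\<in>{Suc i..<i+c}. R n)"
proof (induction js arbitrary: i r t c)
  case Nil then show ?case by simp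
next
  case (Cons a js)
  have nn: "sum_list (map s js) \<ge> 0" using Cons.prems(1) by (intro sum_list_nonneg) auto
  show ?case
  proof (cases "s a \<le> r")
    case True
    have "sum_list (map s js) > r - s a + (\<Sum>n\<in>{Suc i..<i+c}. R n)"
      using Cons True by auto
    then show ?thesis by simp
  next
    case False
    show ?thesis
    proof (cases "c = 1")
      case True then show ?thesis using False nn by simp
    next
      case c1: False
      have "sum_list (map s js) > R (Suc i) + (\<Sum>n\<in>{Suc (Suc i)..<Suc i+(c - 1)}. R n)"
        using Cons.IH[of "c - 1" "Suc i" "R (Suc i)" "Suc t"] Cons.prems False c1 by auto
      moreover have "(\<Sum>n\<in>{Suc i..<i+c}. R n) = R (Suc i) + (\<Sum>n\<in>{Suc (Suc i)..<Suc i+(c - 1)}. R n)"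
        using c1 Cons.prems(2) by (subst sum.atLeast_Suc_lessThan) auto
      ultimately show ?thesis using False by simp
    qed
  qed
qed

lemma g_xcount: "length (filter (\<lambda>p. snd p = Extra e) (greedy s R L i r t js)) \<le> card {q\<in>{t..<t + nx (greedy s R L i r t js)}. q div L = e}"
proof (induction js arbitrary: i r t)
  case Nil then show ?case by simp
next
  case (Cons a js)
  show ?case
  proof (cases "s a \<le> r")
    case True then show ?thesis using Cons by simp
  next
    case False
    let ?G = "greedy s R L (Suc i) (R (Suc i)) (Suc t) js"
    have IH: "length (filter (\<lambda>p. snd p = Extra e) ?G) \<le> card {q\<in>{Suc t..<Suc t + nx ?G}. q div L = e}" using Cons by blast
    have eq: "{q\<in>{t..<t + Suc (nx ?G)}. q div L = e} = (if t div L = e then insert t else id) {q\<in>{Suc t..<Suc t + nx ?G}. q div L = e}"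
      by (auto simp: Suc_le_eq order.order_iff_strict)
    let ?A = "{q\<in>{Suc t..<Suc t + nx ?G}. q div L = e}"
    have fin: "finite ?A" by simp
    have tn: "t \<notin> ?A" by simp
    have "length (filter (\<lambda>p. snd p = Extra e) (greedy s R L i r t (a # js))) \<le> card ((if t div L = e then insert t else id) ?A)"
      using False IH card_insert_disjoint[OF fin tn] by auto
    moreover have "nx (greedy s R L i r t (a # js)) = Suc (nx ?G)" using False by simp
    ultimately show ?thesis by (simp only: eq)
  qed
qed

theorem lemmaC5:
  fixes \<epsilon> :: real and m :: nat and S :: "nat \<Rightarrow> real" and s :: "'a \<Rightarrow> real"
    and JB :: "'a set" and pB :: "'a \<Rightarrow> nat" and js :: "'a list"
  assumes eps_pos: "\<epsilon> > 0"
    and eps_inv: "1 / \<epsilon> \<in> \<nat>"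
    and eps_m: "\<epsilon> * real m \<in> \<nat>"
    and m_pos: "m > 0"
    and cap_pos: "\<forall>i<m. S i > 0"
    and size_pos: "\<forall>j \<in> JB \<union> set js. s j > 0"
    and finJB: "finite JB"
    and dist: "distinct js"
    and disj: "JB \<inter> set js = {}"
    and small: "\<forall>j\<in>set js. \<forall>i<m. s j < \<epsilon> * S i"
    and big_packed: "feasible_packing JB s {..<m} S pB"
    and free: "(\<Sum>i<m. residual S JB s pB i) \<ge> (\<Sum>j\<in>set js. s j)"
  shows "feasible_packing (JB \<union> set js) s (all_knaps m (nat \<lfloor>\<epsilon> * real m\<rfloor>))
           (knap_cap S m) (greedy_packing \<epsilon> S JB s pB js)"
proof -
  define R where "R = residual S JB s pB"
  define L where "L = nat \<lfloor>1 / \<epsilon>\<rfloor>"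
  define G where "G = greedy s R L 0 (R 0) 0 js"
  define P where "P = greedy_packing \<epsilon> S JB s pB js"
  define K where "K = nat \<lfloor>\<epsilon> * real m\<rfloor>"
  have P_def2: "P j = (case map_of G j of Some k \<Rightarrow> k | None \<Rightarrow> Orig (pB j))" for j
    unfolding P_def greedy_packing_def G_def R_def L_def Let_def by simp
  obtain n where n: "1 / \<epsilon> = real n" using eps_inv by (auto elim: Nats_cases)
  obtain k0 where k0: "\<epsilon> * real m = real k0" using eps_m by (auto elim: Nats_cases)
  have Ln: "L = n" unfolding L_def n by simp
  have Kk: "K = k0" unfolding K_def k0 by simp
  have en: "\<epsilon> * real n = 1" using n eps_pos by (simp add: field_simps)
  have npos: "n > 0" using en by (cases n) auto
  have mnk: "m = n * K"
  proof -
    have "real m = real n * (\<epsilon> * real m)" using en by (simp add: algebra_simps)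
    then have "real m = real (n * k0)" using k0 by simp
    then show ?thesis using Kk of_nat_eq_iff by metis
  qed
  have fstG: "map fst G = js" unfolding G_def by (rule g_fst)
  have distG: "distinct (map fst G)" using fstG dist by simp
  have inG: "j \<in> set js \<Longrightarrow> (j, P j) \<in> set G" for j
  proof -
    assume "j \<in> set js"
    then obtain v where v: "(j, v) \<in> set G" using fstG by (metis fst_conv imageE set_map prod.collapse)
    then have "map_of G j = Some v" using distG by (rule map_of_is_SomeI[rotated])
    then show ?thesis using v P_def2 by simp
  qed
  have PJB: "j \<in> JB \<Longrightarrow> P j = Orig (pB j)" for j
  proof -
    assume "j \<in> JB"
    then have "j \<notin> fst ` set G" using disj fstG by (metis disjoint_iff set_map)
    then have "map_of G j = None" by (simp add: map_of_eq_None_iff)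
    then show ?thesis using P_def2 by simp
  qed
  have pBm: "j \<in> JB \<Longrightarrow> pB j < m" for j using big_packed unfolding feasible_packing_def by auto
  have Rnn: "k < m \<Longrightarrow> R k \<ge> 0" for k
    using big_packed unfolding feasible_packing_def R_def residual_def by auto
  have snn: "\<forall>j\<in>set js. s j \<ge> 0" using size_pos by (auto intro: less_imp_le)
  have nxm: "nx G < m"
  proof (rule ccontr)
    assume "\<not> nx G < m"
    then have "sum_list (map s js) > R 0 + (\<Sum>n\<in>{Suc 0..<0+m}. R n)"
      using g_close[OF snn, of m R L 0 "R 0" 0] m_pos unfolding G_def by simp
    also have "R 0 + (\<Sum>n\<in>{Suc 0..<0+m}. R n) = (\<Sum>i<m. R i)"
      using m_pos by (simp add: lessThan_atLeast0 sum.atLeast_Suc_lessThan)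
    finally show False using free dist unfolding R_def by (simp add: sum_list_distinct_conv_sum_set)
  qed
  have part1: "\<forall>j\<in>JB \<union> set js. P j \<in> all_knaps m K"
  proof
    fix j assume j: "j \<in> JB \<union> set js"
    show "P j \<in> all_knaps m K"
    proof (cases "j \<in> JB")
      case True then show ?thesis using PJB pBm unfolding all_knaps_def by auto
    next
      case False
      then have jj: "(j, P j) \<in> set G" using j inG by auto
      show ?thesis
      proof (cases "P j")
        case (Orig k)
        then have "k \<le> nx G" using g_orig[of j k s R L 0 "R 0" 0 js] jj unfolding G_def by auto
        then show ?thesis using Orig nxm unfolding all_knaps_def by auto
      next
        case (Extra e)
        then obtain q where q: "q < nx G" "e = q div L" using g_extra[of j e s R L 0 "R 0" 0 js] jj unfolding G_def by auto
        then have "q < n * K" using nxm mnk by simp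
        then have "e < K" using q Ln npos by (simp add: less_mult_imp_div_less mult.commute)
        then show ?thesis using Extra unfolding all_knaps_def by auto
      qed
    qed
  qed
  have subF: "{j \<in> set js. P j = b} \<subseteq> set (map fst (filter (\<lambda>p. snd p = b) G))" for b
    using inG by force
  have distF: "distinct (map fst (filter (\<lambda>p. snd p = b) G))" for b
    using distG by (simp add: distinct_map_filter)
  have sumF: "(\<Sum>j\<in>{j \<in> set js. P j = b}. s j) \<le> sum_list (map (\<lambda>p. s (fst p)) (filter (\<lambda>p. snd p = b) G))" for b
  proof -
    have "(\<Sum>j\<in>{j \<in> set js. P j = b}. s j) \<le> (\<Sum>j\<in>set (map fst (filter (\<lambda>p. snd p = b) G)). s j)"
      apply (rule sum_mono2[OF _ subF])
      using snn fstG by (auto, force+)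
    also have "\<dots> = sum_list (map s (map fst (filter (\<lambda>p. snd p = b) G)))"
      by (rule sum_list_distinct_conv_sum_set[OF distF, symmetric])
    finally show ?thesis by (simp add: o_def)
  qed
  have splitS: "(\<Sum>j\<in>{j\<in>JB \<union> set js. P j = b}. s j) = (\<Sum>j\<in>{j\<in>JB. P j = b}. s j) + (\<Sum>j\<in>{j\<in>set js. P j = b}. s j)" for b
  proof -
    have "{j\<in>JB \<union> set js. P j = b} = {j\<in>JB. P j = b} \<union> {j\<in>set js. P j = b}" by auto
    then show ?thesis using finJB disj by (simp add: sum.union_disjoint disjoint_iff)
  qed
  have part2: "\<forall>b\<in>all_knaps m K. (\<Sum>j\<in>{j\<in>JB \<union> set js. P j = b}. s j) \<le> knap_cap S m b"
  proof
    fix b assume b: "b \<in> all_knaps m K"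
    show "(\<Sum>j\<in>{j\<in>JB \<union> set js. P j = b}. s j) \<le> knap_cap S m b"
    proof (cases b)
      case (Orig k)
      then have km: "k < m" using b unfolding all_knaps_def by auto
      have "{j\<in>JB. P j = b} = {j\<in>JB. pB j = k}" using PJB Orig by auto
      then have s1: "(\<Sum>j\<in>{j\<in>JB. P j = b}. s j) = S k - R k" unfolding R_def residual_def by simp
      have "sum_list (map (\<lambda>p. s (fst p)) (filter (\<lambda>p. snd p = b) G)) \<le> (if k = 0 then max 0 (R 0) else max 0 (R k))"
        unfolding G_def Orig by (rule g_sum_orig) simp
      then have "sum_list (map (\<lambda>p. s (fst p)) (filter (\<lambda>p. snd p = b) G)) \<le> R k"
        using Rnn[OF km] by (auto split: if_splits)
      then show ?thesis using s1 sumF[of b] splitS[of b] Orig unfolding knap_cap_def by simp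
    next
      case (Extra e)
      have "{j\<in>JB. P j = b} = {}" using PJB Extra by auto
      then have s1: "(\<Sum>j\<in>{j\<in>JB. P j = b}. s j) = 0" by (simp only: sum.empty)
      define Mn where "Mn = Min (S ` {..<m})"
      have Mn: "\<exists>i<m. Mn = S i" unfolding Mn_def using m_pos
        by (metis (no_types, lifting) Min_in empty_iff finite_imageI finite_lessThan image_iff image_is_empty lessThan_iff)
      have bound: "\<forall>j\<in>set (map fst (filter (\<lambda>p. snd p = b) G)). s j \<le> \<epsilon> * Mn"
      proof
        fix j assume "j \<in> set (map fst (filter (\<lambda>p. snd p = b) G))"
        then have "j \<in> set js" using fstG by (metis filter_is_subset image_mono in_mono set_map)
        moreover obtain i where "i < m" "Mn = S i" using Mn by blast
        ultimately show "s j \<le> \<epsilon> * Mn" using small by (simp add: less_imp_le)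
      qed
      have "card (set (map fst (filter (\<lambda>p. snd p = b) G))) = length (filter (\<lambda>p. snd p = b) G)"
        using distinct_card[OF distF[of b]] by simp
      also have "length (filter (\<lambda>p. snd p = b) G) \<le> card {q\<in>{0..<0 + nx G}. q div L = e}"
        unfolding G_def Extra by (rule g_xcount)
      also have "card {q\<in>{0..<0 + nx G}. q div L = e} \<le> card {e*n..<e*n+n}"
      proof (rule card_mono)
        show "{q\<in>{0..<0 + nx G}. q div L = e} \<subseteq> {e*n..<e*n+n}"
        proof
          fix q assume "q \<in> {q\<in>{0..<0 + nx G}. q div L = e}"
          then have "q div n = e" using Ln by simp
          then have "q = e*n + q mod n" using div_mult_mod_eq[of q n] by simp
          moreover have "q mod n < n" using npos by simp
          ultimately show "q \<in> {e*n..<e*n+n}" unfolding atLeastLessThan_iff by linarith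
        qed
      qed simp
      also have "card {e*n..<e*n+n} = n" by simp
      finally have cn: "card (set (map fst (filter (\<lambda>p. snd p = b) G))) \<le> n" .
      have Mpos: "\<epsilon> * Mn \<ge> 0"
      proof -
        obtain i where "i < m" "Mn = S i" using Mn by blast
        then show ?thesis using cap_pos eps_pos by (simp add: less_imp_le)
      qed
      have "sum_list (map (\<lambda>p. s (fst p)) (filter (\<lambda>p. snd p = b) G))
          = (\<Sum>j\<in>set (map fst (filter (\<lambda>p. snd p = b) G)). s j)"
        using sum_list_distinct_conv_sum_set[OF distF[of b], of s] by (simp add: o_def)
      also have "\<dots> \<le> real (card (set (map fst (filter (\<lambda>p. snd p = b) G)))) * (\<epsilon> * Mn)"
        by (rule sum_bounded_above) (use bound in blast)
      also have "\<dots> \<le> real n * (\<epsilon> * Mn)"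
        by (rule mult_right_mono) (use cn Mpos in simp_all)
      also have "\<dots> = (\<epsilon> * real n) * Mn" by (simp only: mult_ac)
      also have "\<dots> = Mn" by (simp only: en mult_1)
      finally show ?thesis using s1 sumF[of b] splitS[of b] Extra unfolding knap_cap_def Mn_def by simp
    qed
  qed
  show ?thesis using part1 part2 unfolding feasible_packing_def P_def K_def by simp
qed

end
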